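(* Let $\mathcal H_A,\mathcal H_B$ be Hilbert spaces of dimension $N$, $\rho_{AB}$ a density operator on $\mathcal H_A\otimes\mathcal H_B$, and $X,Y$ projective measurements on $A$ (given by orthonormal bases of $\mathcal H_A$). Let $\vec s^{\,(x)}$ (resp. $\vec s^{\,(y)}$) be the least upper bound in the majorization lattice of the set $\{\vec p(x|x')\}$ (resp. $\{\vec p(y|y')\}$), where $X'$ (resp. $Y'$) ranges over all projective measurements on $B$ given by orthonormal bases of $\mathcal H_B$. Then for all projective measurements $X',Y'$ on $B$, $$\vec p(x|x')\oplus\vec p(y|y')\prec \vec s^{\,(x)}\oplus\vec s^{\,(y)},\qquad \vec p(x|x')\otimes\vec p(y|y')\prec \vec s^{\,(x)}\otimes\vec s^{\,(y)},\qquad \vec p(x|x')+\vec p(y|y')\prec \vec s^{\,(x)\downarrow}+\vec s^{\,(y)\downarrow},$$ i.e. $\vec p(x|x')*\vec p(y|y')\prec\vec s^{\,(x)}*\vec s^{\,(y)}$ for each binary operation $*$ among direct sum (concatenation), direct (Kronecker) product, and vector sum of descending-ordered vectors.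
   Context: For a measurement $X$ on $A$ with basis $\{|x_i\rangle\}$ and $X'$ on $B$ with basis $\{|x'_\mu\rangle\}$, set $P_{i\mu}=\langle x_i|\otimes\langle x'_\mu|\,\rho_{AB}\,|x_i\rangle\otimes|x'_\mu\rangle$, $\vec p^{\,(\mu)}(x)=(P_{1\mu},\dots,P_{N\mu})$, and define the majorized marginal $\vec p(x|x')=\sum_{\mu=1}^N\vec p^{\,(\mu)\downarrow}(x)$, where $\downarrow$ denotes rearrangement of components in descending order; similarly for $\vec p(y|y')$. Majorization: for real vectors of equal length, $\vec a\prec\vec b$ means that after sorting both in descending order, $\sum_{i=1}^k a_i\le\sum_{i=1}^k b_i$ for every $k$, with equality when $k$ is the full length. The set of descending-ordered probability vectors is a lattice under $\prec$, and the least upper bound of $\{\vec p(x|x')\}$ exists in it. *)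

theory Defs
  imports Complex_Main
begin

text \<open>The Hilbert spaces H_A, H_B are C^N with coordinates indexed by
  {0..<N}; a vector is a function nat => complex (only indices < N matter).
  H_A (x) H_B is indexed by pairs (a,b) in {0..<N} x {0..<N}.
  A projective measurement is an orthonormal basis, given as a family
  X :: nat => (nat => complex), with X i the i-th basis vector (i < N).\<close>

definition idx2 :: "nat \<Rightarrow> (nat \<times> nat) set" where
  "idx2 N = {0..<N} \<times> {0..<N}"

definition density_op :: "nat \<Rightarrow> (nat \<times> nat \<Rightarrow> nat \<times> nat \<Rightarrow> complex) \<Rightarrow> bool" where
  "density_op N \<rho> \<longleftrightarrow>
     (\<forall>a\<in>idx2 N. \<forall>b\<in>idx2 N. \<rho> a b = cnj (\<rho> b a)) \<and>
     (\<forall>v :: nat \<times> nat \<Rightarrow> complex.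
        0 \<le> Re (\<Sum>a\<in>idx2 N. \<Sum>b\<in>idx2 N. cnj (v a) * \<rho> a b * v b)) \<and>
     (\<Sum>a\<in>idx2 N. \<rho> a a) = 1"

definition onb :: "nat \<Rightarrow> (nat \<Rightarrow> nat \<Rightarrow> complex) \<Rightarrow> bool" where
  "onb N X \<longleftrightarrow> (\<forall>i<N. \<forall>j<N. (\<Sum>k<N. cnj (X i k) * X j k) = (if i = j then 1 else 0))"

text \<open>P_{i mu} = <x_i (x) x'_mu| rho |x_i (x) x'_mu>  (real for Hermitian rho).\<close>
definition joint_prob ::
  "nat \<Rightarrow> (nat \<times> nat \<Rightarrow> nat \<times> nat \<Rightarrow> complex) \<Rightarrow> (nat \<Rightarrow> nat \<Rightarrow> complex)
     \<Rightarrow> (nat \<Rightarrow> nat \<Rightarrow> complex) \<Rightarrow> nat \<Rightarrow> nat \<Rightarrow> real" where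
  "joint_prob N \<rho> X X' i \<mu> =
     Re (\<Sum>a\<in>idx2 N. \<Sum>b\<in>idx2 N.
           cnj (X i (fst a) * X' \<mu> (snd a)) * \<rho> a b * (X i (fst b) * X' \<mu> (snd b)))"

definition sort_desc :: "real list \<Rightarrow> real list" where
  "sort_desc xs = rev (sort xs)"

definition pvec ::
  "nat \<Rightarrow> (nat \<times> nat \<Rightarrow> nat \<times> nat \<Rightarrow> complex) \<Rightarrow> (nat \<Rightarrow> nat \<Rightarrow> complex)
     \<Rightarrow> (nat \<Rightarrow> nat \<Rightarrow> complex) \<Rightarrow> nat \<Rightarrow> real list" where
  "pvec N \<rho> X X' \<mu> = map (\<lambda>i. joint_prob N \<rho> X X' i \<mu>) [0..<N]"

definition maj_marginal ::
  "nat \<Rightarrow> (nat \<times> nat \<Rightarrow> nat \<times> nat \<Rightarrow> complex) \<Rightarrow> (nat \<Rightarrow> nat \<Rightarrow> complex)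
     \<Rightarrow> (nat \<Rightarrow> nat \<Rightarrow> complex) \<Rightarrow> real list" where
  "maj_marginal N \<rho> X X' =
     map (\<lambda>k. \<Sum>\<mu><N. sort_desc (pvec N \<rho> X X' \<mu>) ! k) [0..<N]"

definition majorized :: "real list \<Rightarrow> real list \<Rightarrow> bool" where
  "majorized a b \<longleftrightarrow> length a = length b \<and>
     (\<forall>k\<le>length a. sum_list (take k (sort_desc a)) \<le> sum_list (take k (sort_desc b))) \<and>
     sum_list a = sum_list b"

definition desc_prob_vec :: "nat \<Rightarrow> real list \<Rightarrow> bool" where
  "desc_prob_vec N v \<longleftrightarrow> length v = N \<and> sorted (rev v) \<and> (\<forall>x\<in>set v. 0 \<le> x) \<and> sum_list v = 1"

definition is_maj_lub :: "nat \<Rightarrow> real list set \<Rightarrow> real list \<Rightarrow> bool" where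
  "is_maj_lub N S s \<longleftrightarrow> desc_prob_vec N s \<and> (\<forall>v\<in>S. majorized v s) \<and>
     (\<forall>t. desc_prob_vec N t \<and> (\<forall>v\<in>S. majorized v t) \<longrightarrow> majorized s t)"

definition marginal_set ::
  "nat \<Rightarrow> (nat \<times> nat \<Rightarrow> nat \<times> nat \<Rightarrow> complex) \<Rightarrow> (nat \<Rightarrow> nat \<Rightarrow> complex) \<Rightarrow> real list set" where
  "marginal_set N \<rho> X = {maj_marginal N \<rho> X X' | X'. onb N X'}"

definition kron :: "real list \<Rightarrow> real list \<Rightarrow> real list" where
  "kron xs ys = concat (map (\<lambda>a. map (\<lambda>b. a * b) ys) xs)"

definition vsum :: "real list \<Rightarrow> real list \<Rightarrow> real list" where
  "vsum xs ys = map2 (+) xs ys"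

end

theory Submission
  imports Defs "HOL-Combinatorics.Permutations" "HOL-Library.Multiset"
begin

definition topk :: "'a set \<Rightarrow> ('a \<Rightarrow> real) \<Rightarrow> nat \<Rightarrow> real" where
 "topk A f k = Max ((\<lambda>I. sum f I) ` {I. I \<subseteq> A \<and> card I = k})"

definition fmaj :: "'a set \<Rightarrow> ('a \<Rightarrow> real) \<Rightarrow> ('a \<Rightarrow> real) \<Rightarrow> bool" where
 "fmaj A f g \<longleftrightarrow> (\<forall>k \<le> card A. topk A f k \<le> topk A g k) \<and> sum f A = sum g A"

lemma topk_fin: "finite A \<Longrightarrow> finite {I. I \<subseteq> A \<and> card I = k}"
  by (rule finite_subset[of _ "Pow A"]) auto

lemma topk_ge: "finite A \<Longrightarrow> I \<subseteq> A \<Longrightarrow> sum f I \<le> topk A f (card I)"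
  unfolding topk_def by (rule Max_ge) (auto intro: finite_imageI topk_fin)

lemma topk_attained:
  assumes "finite A" "k \<le> card A"
  shows "\<exists>I. I \<subseteq> A \<and> card I = k \<and> sum f I = topk A f k"
proof -
  obtain T where "T \<subseteq> A" "card T = k" using obtain_subset_with_card_n[OF assms(2)] by metis
  hence ne: "{I. I \<subseteq> A \<and> card I = k} \<noteq> {}" by auto
  have "topk A f k \<in> (\<lambda>I. sum f I) ` {I. I \<subseteq> A \<and> card I = k}"
    unfolding topk_def by (rule Max_in) (use ne topk_fin[OF assms(1)] in auto)
  thus ?thesis by auto
qed

lemma topk_cong: "(\<And>x. x \<in> A \<Longrightarrow> f x = g x) \<Longrightarrow> topk A f k = topk A g k"
proof -
  assume h: "\<And>x. x \<in> A \<Longrightarrow> f x = g x"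
  have "(\<lambda>I. sum f I) ` {I. I \<subseteq> A \<and> card I = k} = (\<lambda>I. sum g I) ` {I. I \<subseteq> A \<and> card I = k}"
    by (rule image_cong) (auto intro!: sum.cong h)
  thus ?thesis unfolding topk_def by simp
qed

lemma topk_bij:
  assumes b: "bij_betw h B A"
  shows "topk B (f \<circ> h) k = topk A f k"
proof -
  have "(\<lambda>I. sum (f \<circ> h) I) ` {I. I \<subseteq> B \<and> card I = k} = (\<lambda>I. sum f I) ` {J. J \<subseteq> A \<and> card J = k}"
  proof (intro equalityI subsetI)
    fix y assume "y \<in> (\<lambda>I. sum (f \<circ> h) I) ` {I. I \<subseteq> B \<and> card I = k}"
    then obtain I where I: "I \<subseteq> B" "card I = k" "y = sum (f \<circ> h) I" by auto
    have inj: "inj_on h I" using b I(1) by (meson bij_betw_def inj_on_subset)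
    have "y = sum f (h ` I)" using I(3) by (simp add: sum.reindex[OF inj])
    moreover have "h ` I \<subseteq> A" using b I(1) bij_betw_imp_surj_on by blast
    moreover have "card (h ` I) = k" using card_image[OF inj] I(2) by simp
    ultimately show "y \<in> (\<lambda>I. sum f I) ` {J. J \<subseteq> A \<and> card J = k}" by auto
  next
    fix y assume "y \<in> (\<lambda>I. sum f I) ` {J. J \<subseteq> A \<and> card J = k}"
    then obtain J where J: "J \<subseteq> A" "card J = k" "y = sum f J" by auto
    define I where "I = B \<inter> h -` J"
    have hI: "h ` I = J" using b J(1) unfolding I_def bij_betw_def by blast
    have inj: "inj_on h I" using b unfolding I_def by (meson bij_betw_def inj_on_subset Int_lower1)
    have "y = sum (f \<circ> h) I" using J(3) hI sum.reindex[OF inj, of f] by simp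
    moreover have "card I = k" using card_image[OF inj] hI J(2) by simp
    ultimately show "y \<in> (\<lambda>I. sum (f \<circ> h) I) ` {I. I \<subseteq> B \<and> card I = k}"
      unfolding I_def by auto
  qed
  thus ?thesis unfolding topk_def by simp
qed

lemma fmaj_cong: "(\<And>x. x \<in> A \<Longrightarrow> f x = f2 x) \<Longrightarrow> (\<And>x. x \<in> A \<Longrightarrow> g x = g2 x)
   \<Longrightarrow> fmaj A f g \<longleftrightarrow> fmaj A f2 g2"
  unfolding fmaj_def using topk_cong[of A f f2] topk_cong[of A g g2] sum.cong[of A A f f2] sum.cong[of A A g g2]
  by simp

lemma fmaj_bij:
  assumes b: "bij_betw h B A"
  shows "fmaj B (f \<circ> h) (g \<circ> h) \<longleftrightarrow> fmaj A f g"
proof -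
  have c: "card B = card A" using b bij_betw_same_card by blast
  have s: "sum (f \<circ> h) B = sum f A" "sum (g \<circ> h) B = sum g A"
    using sum.reindex_bij_betw[OF b] by (auto simp: comp_def)
  show ?thesis unfolding fmaj_def c s topk_bij[OF b] ..
qed

lemma fmaj_trans: "fmaj A f g \<Longrightarrow> fmaj A g h \<Longrightarrow> fmaj A f h"
  unfolding fmaj_def by (metis order_trans)

lemma sorted_desc_subset:
  fixes s :: "nat \<Rightarrow> real"
  assumes mono: "\<And>i j. i \<le> j \<Longrightarrow> j < n \<Longrightarrow> s j \<le> s i"
    and I: "I \<subseteq> {..<n}" "card I = k"
  shows "sum s I \<le> sum s {..<k}"
proof -
  have fI: "finite I" using I(1) finite_subset by blast
  define P where "P = I - {..<k}"
  define Q where "Q = {..<k} - I"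
  have cI: "card I = card (I \<inter> {..<k}) + card P" unfolding P_def
    using card_Int_Diff[OF fI] by blast
  have cK: "k = card (I \<inter> {..<k}) + card Q" unfolding Q_def
    using card_Int_Diff[of "{..<k}" I] by (simp add: Int_commute)
  have cPQ: "card P = card Q" using cI cK I(2) by simp
  have sI: "sum s I = sum s (I \<inter> {..<k}) + sum s P" unfolding P_def
    using sum.Int_Diff[OF fI] by blast
  have sK: "sum s {..<k} = sum s (I \<inter> {..<k}) + sum s Q" unfolding Q_def
    using sum.Int_Diff[of "{..<k}" s I] by (simp add: Int_commute)
  have "sum s P \<le> sum s Q"
  proof (cases "P = {}")
    case True
    hence "card Q = 0" using cPQ by simp
    hence "Q = {}" unfolding Q_def by simp
    with True show ?thesis by simp
  next
    case False
    then obtain x where x: "x \<in> P" by blast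
    hence kn: "k < n" using I(1) unfolding P_def by auto
    have fP: "finite P" unfolding P_def using fI by simp
    have "\<forall>i\<in>P. s i \<le> s k" using mono I(1) unfolding P_def by (auto simp: subset_iff not_less)
    hence "sum s P \<le> of_nat (card P) * s k"
      using sum_bounded_above[of P s "s k"] by auto
    also have "\<dots> = of_nat (card Q) * s k" using cPQ by simp
    also have "\<dots> \<le> sum s Q"
      using sum_bounded_below[of Q "s k" s] mono kn unfolding Q_def by auto
    finally show ?thesis .
  qed
  thus ?thesis using sI sK by simp
qed

lemma sum_list_take_nth: "k \<le> length xs \<Longrightarrow> sum_list (take k xs) = sum ((!) xs) {..<k}"
  by (simp add: sum_list_sum_nth atLeast0LessThan min_absorb2)

lemma length_sort_desc[simp]: "length (sort_desc xs) = length xs"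
  by (simp add: sort_desc_def)

lemma mset_sort_desc[simp]: "mset (sort_desc xs) = mset xs"
  by (simp add: sort_desc_def)

lemma set_sort_desc[simp]: "set (sort_desc xs) = set xs"
  by (simp add: sort_desc_def)

lemma sum_list_sort_desc[simp]: "sum_list (sort_desc xs) = sum_list (xs :: real list)"
  by (metis mset_sort_desc sum_mset_sum_list)

lemma sorted_sort_desc: "sorted (rev (sort_desc xs))"
  by (simp add: sort_desc_def)

lemma sort_desc_id: "sorted (rev xs) \<Longrightarrow> sort_desc xs = xs"
proof -
  assume "sorted (rev xs)"
  hence "sort (rev xs) = rev xs" by (rule sorted_sort_id)
  moreover have "sort xs = sort (rev xs)" by (rule properties_for_sort) auto
  ultimately show ?thesis by (simp add: sort_desc_def)
qed

lemma L1:
  assumes k: "k \<le> length xs"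
  shows "sum_list (take k (sort_desc xs)) = topk {..<length xs} ((!) xs) k"
proof -
  let ?s = "sort_desc xs" and ?n = "length xs"
  obtain p where p: "p permutes {..<?n}" "permute_list p xs = ?s"
    using mset_eq_permutation[of ?s xs] by auto
  have nth: "?s ! i = xs ! p i" if "i < ?n" for i
    using permute_list_nth[OF p(1) that] p(2) by simp
  have "topk {..<?n} ((!) xs) k = topk {..<?n} ((!) xs \<circ> p) k"
    using topk_bij[OF permutes_imp_bij[OF p(1)]] by simp
  also have "\<dots> = topk {..<?n} ((!) ?s) k" by (rule topk_cong) (simp add: nth)
  also have "\<dots> = sum ((!) ?s) {..<k}"
  proof (rule antisym)
    obtain I where I: "I \<subseteq> {..<?n}" "card I = k" "sum ((!) ?s) I = topk {..<?n} ((!) ?s) k"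
      using topk_attained[of "{..<?n}" k] k by auto
    have mono: "?s ! j \<le> ?s ! i" if "i \<le> j" "j < ?n" for i j
      using sorted_sort_desc[of xs] that unfolding sorted_rev_iff_nth_mono by simp
    show "topk {..<?n} ((!) ?s) k \<le> sum ((!) ?s) {..<k}"
      using sorted_desc_subset[of ?n "(!) ?s", OF mono I(1,2)] I(3) by simp
  next
    show "sum ((!) ?s) {..<k} \<le> topk {..<?n} ((!) ?s) k"
      using topk_ge[of "{..<?n}" "{..<k}" "(!) ?s"] k by simp
  qed
  finally show ?thesis using sum_list_take_nth[of k ?s] k by simp
qed

lemma majorized_iff:
  "majorized a b \<longleftrightarrow> length a = length b \<and> fmaj {..<length a} ((!) a) ((!) b)"
proof -
  have e: "sum_list xs = sum ((!) xs) {..<length xs}" for xs :: "real list"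
    by (simp add: sum_list_sum_nth atLeast0LessThan)
  show ?thesis unfolding majorized_def fmaj_def e[of a] e[of b]
    by (auto simp: L1)
qed

lemma take_sum_le: "k \<le> length v \<Longrightarrow> sum_list (take k v) \<le> sum_list (take k (sort_desc v))"
  using L1[of k v] sum_list_take_nth[of k v] topk_ge[of "{..<length v}" "{..<k}" "(!) v"] by simp


lemma sum_split_Plus:
  fixes h :: "'a + 'b \<Rightarrow> real"
  assumes "finite I"
  shows "sum h I = sum (h \<circ> Inl) (Inl -` I) + sum (h \<circ> Inr) (Inr -` I)"
proof -
  have I: "I = Inl ` (Inl -` I) \<union> Inr ` (Inr -` I)"
  proof (intro equalityI subsetI)
    fix x assume "x \<in> I" thus "x \<in> Inl ` (Inl -` I) \<union> Inr ` (Inr -` I)" by (cases x) auto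
  qed auto
  have f1: "finite (Inl -` I)" and f2: "finite (Inr -` I)" using assms by (auto intro: finite_vimageI)
  have "sum h I = sum h (Inl ` (Inl -` I)) + sum h (Inr ` (Inr -` I))"
    by (subst I, rule sum.union_disjoint) (use assms in auto)
  also have "\<dots> = sum (h \<circ> Inl) (Inl -` I) + sum (h \<circ> Inr) (Inr -` I)"
  proof -
    have "sum h (Inl ` (Inl -` I)) = sum (h \<circ> Inl) (Inl -` I)" by (rule sum.reindex) simp
    moreover have "sum h (Inr ` (Inr -` I)) = sum (h \<circ> Inr) (Inr -` I)" by (rule sum.reindex) simp
    ultimately show ?thesis by simp
  qed
  finally show ?thesis .
qed

lemma card_split_Plus:
  assumes "finite (I :: ('a + 'b) set)"
  shows "card I = card (Inl -` I) + card (Inr -` I)"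
  using sum_split_Plus[OF assms, of "\<lambda>_. 1"] by (simp add: comp_def)

lemma fmaj_plus:
  assumes fA: "finite A" and fB: "finite B" and m1: "fmaj A f f'" and m2: "fmaj B g g'"
  shows "fmaj (A <+> B) (case_sum f g) (case_sum f' g')"
  unfolding fmaj_def
proof (intro conjI allI impI)
  have fP: "finite (A <+> B)" using fA fB by simp
  fix k assume k: "k \<le> card (A <+> B)"
  obtain I where I: "I \<subseteq> A <+> B" "card I = k" "sum (case_sum f g) I = topk (A <+> B) (case_sum f g) k"
    using topk_attained[OF fP k] by blast
  have fI: "finite I" using finite_subset[OF I(1) fP] .
  let ?I1 = "Inl -` I" and ?I2 = "Inr -` I"
  have s1: "?I1 \<subseteq> A" and s2: "?I2 \<subseteq> B" using I(1) by auto
  have c1: "card ?I1 \<le> card A" using card_mono[OF fA s1] .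
  have c2: "card ?I2 \<le> card B" using card_mono[OF fB s2] .
  obtain J1 where J1: "J1 \<subseteq> A" "card J1 = card ?I1" "sum f' J1 = topk A f' (card ?I1)"
    using topk_attained[OF fA c1] by blast
  obtain J2 where J2: "J2 \<subseteq> B" "card J2 = card ?I2" "sum g' J2 = topk B g' (card ?I2)"
    using topk_attained[OF fB c2] by blast
  have "topk (A <+> B) (case_sum f g) k = sum f ?I1 + sum g ?I2"
    using I(3) sum_split_Plus[OF fI, of "case_sum f g"] by (simp add: comp_def)
  also have "\<dots> \<le> topk A f (card ?I1) + topk B g (card ?I2)"
    using topk_ge[OF fA s1, of f] topk_ge[OF fB s2, of g] by simp
  also have "\<dots> \<le> topk A f' (card ?I1) + topk B g' (card ?I2)"
  proof -
    have "topk A f (card ?I1) \<le> topk A f' (card ?I1)" using m1 c1 unfolding fmaj_def by blast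
    moreover have "topk B g (card ?I2) \<le> topk B g' (card ?I2)" using m2 c2 unfolding fmaj_def by blast
    ultimately show ?thesis by (rule add_mono)
  qed
  also have "\<dots> = sum (case_sum f' g') (Inl ` J1 \<union> Inr ` J2)"
  proof -
    have fJ: "finite (Inl ` J1 \<union> Inr ` J2)" using finite_subset[OF J1(1) fA] finite_subset[OF J2(1) fB] by simp
    have "Inl -` (Inl ` J1 \<union> Inr ` J2) = J1" "Inr -` (Inl ` J1 \<union> Inr ` J2) = J2" by auto
    thus ?thesis using sum_split_Plus[OF fJ, of "case_sum f' g'"] J1 J2 by (simp add: comp_def)
  qed
  also have "\<dots> \<le> topk (A <+> B) (case_sum f' g') (card (Inl ` J1 \<union> Inr ` J2))"
    by (rule topk_ge[OF fP]) (use J1(1) J2(1) in auto)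
  also have "card (Inl ` J1 \<union> Inr ` J2) = k"
  proof -
    have fJ: "finite (Inl ` J1 \<union> Inr ` J2)" using finite_subset[OF J1(1) fA] finite_subset[OF J2(1) fB] by simp
    have "Inl -` (Inl ` J1 \<union> Inr ` J2) = J1" "Inr -` (Inl ` J1 \<union> Inr ` J2) = J2" by auto
    thus ?thesis using card_split_Plus[OF fJ] card_split_Plus[OF fI] J1 J2 I(2) by simp
  qed
  finally show "topk (A <+> B) (case_sum f g) k \<le> topk (A <+> B) (case_sum f' g') k" .
next
  show "sum (case_sum f g) (A <+> B) = sum (case_sum f' g') (A <+> B)"
  proof -
    have fP: "finite (A <+> B)" using fA fB by simp
    have v: "Inl -` (A <+> B) = A" "Inr -` (A <+> B) = B" by auto
    have "sum f A = sum f' A" "sum g B = sum g' B" using m1 m2 unfolding fmaj_def by blast+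
    thus ?thesis using sum_split_Plus[OF fP, of "case_sum f g"] sum_split_Plus[OF fP, of "case_sum f' g'"] v
      by (simp add: comp_def)
  qed
qed

lemma fmaj_prod_left:
  assumes fA: "finite A" and fB: "finite B" and w: "\<And>i. i \<in> A \<Longrightarrow> 0 \<le> w i"
    and m: "fmaj B g g'"
  shows "fmaj (A \<times> B) (\<lambda>(i,j). w i * g j) (\<lambda>(i,j). w i * g' j)"
  unfolding fmaj_def
proof (intro conjI allI impI)
  have fP: "finite (A \<times> B)" using fA fB by simp
  fix k assume k: "k \<le> card (A \<times> B)"
  obtain I where I: "I \<subseteq> A \<times> B" "card I = k" "sum (\<lambda>(i,j). w i * g j) I = topk (A \<times> B) (\<lambda>(i,j). w i * g j) k"
    using topk_attained[OF fP k] by blast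
  define Ii where "Ii i = {j. (i,j) \<in> I}" for i
  have IS: "I = Sigma A Ii" using I(1) unfolding Ii_def by auto
  have sIi: "Ii i \<subseteq> B" for i using I(1) unfolding Ii_def by auto
  have fIi: "finite (Ii i)" for i using sIi fB finite_subset by blast
  have cIi: "card (Ii i) \<le> card B" for i using sIi fB card_mono by blast
  have "\<forall>i\<in>A. \<exists>J. J \<subseteq> B \<and> card J = card (Ii i) \<and> sum g' J = topk B g' (card (Ii i))"
    using topk_attained[OF fB cIi] by blast
  then obtain J where J: "\<And>i. i \<in> A \<Longrightarrow> J i \<subseteq> B \<and> card (J i) = card (Ii i) \<and> sum g' (J i) = topk B g' (card (Ii i))"
    by metis
  have fJ: "i \<in> A \<Longrightarrow> finite (J i)" for i using J fB finite_subset by blast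
  have "topk (A \<times> B) (\<lambda>(i,j). w i * g j) k = (\<Sum>i\<in>A. w i * sum g (Ii i))"
    using I(3) unfolding IS by (simp add: sum.Sigma[symmetric] fA fIi sum_distrib_left)
  also have "\<dots> \<le> (\<Sum>i\<in>A. w i * sum g' (J i))"
  proof (rule sum_mono)
    fix i assume i: "i \<in> A"
    have "sum g (Ii i) \<le> topk B g (card (Ii i))" using topk_ge[OF fB sIi] .
    also have "\<dots> \<le> topk B g' (card (Ii i))" using m cIi unfolding fmaj_def by blast
    also have "\<dots> = sum g' (J i)" using J[OF i] by simp
    finally show "w i * sum g (Ii i) \<le> w i * sum g' (J i)" using w[OF i] mult_left_mono by blast
  qed
  also have "\<dots> = sum (\<lambda>(i,j). w i * g' j) (Sigma A J)"
    by (simp add: sum.Sigma[symmetric] fA fJ sum_distrib_left)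
  also have "\<dots> \<le> topk (A \<times> B) (\<lambda>(i,j). w i * g' j) (card (Sigma A J))"
    by (rule topk_ge[OF fP]) (use J in blast)
  also have "card (Sigma A J) = k"
  proof -
    have "card (Sigma A J) = (\<Sum>i\<in>A. card (J i))" using fA fJ by simp
    also have "\<dots> = (\<Sum>i\<in>A. card (Ii i))" using J by simp
    also have "\<dots> = card I" unfolding IS using fA fIi by simp
    finally show ?thesis using I(2) by simp
  qed
  finally show "topk (A \<times> B) (\<lambda>(i,j). w i * g j) k \<le> topk (A \<times> B) (\<lambda>(i,j). w i * g' j) k" .
next
  have "sum g B = sum g' B" using m unfolding fmaj_def by simp
  thus "sum (\<lambda>(i,j). w i * g j) (A \<times> B) = sum (\<lambda>(i,j). w i * g' j) (A \<times> B)"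
    by (simp add: sum.cartesian_product[symmetric] sum_distrib_left[symmetric])
qed

lemma fmaj_prod_right:
  assumes fA: "finite A" and fB: "finite B" and w: "\<And>j. j \<in> B \<Longrightarrow> 0 \<le> w j"
    and m: "fmaj A g g'"
  shows "fmaj (A \<times> B) (\<lambda>(i,j). g i * w j) (\<lambda>(i,j). g' i * w j)"
proof -
  have m2: "fmaj (B \<times> A) (\<lambda>(j,i). w j * g i) (\<lambda>(j,i). w j * g' i)"
    by (rule fmaj_prod_left[OF fB fA w m])
  have b: "bij_betw prod.swap (A \<times> B) (B \<times> A)" by (simp add: bij_betw_def inj_on_def product_swap)
  have "fmaj (A \<times> B) ((\<lambda>(j,i). w j * g i) \<circ> prod.swap) ((\<lambda>(j,i). w j * g' i) \<circ> prod.swap)"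
    using fmaj_bij[OF b] m2 by blast
  moreover have "(\<lambda>(j,i). w j * g i) \<circ> prod.swap = (\<lambda>(i,j). g i * w j)"
    "(\<lambda>(j,i). w j * g' i) \<circ> prod.swap = (\<lambda>(i,j). g' i * w j)" by (auto simp: fun_eq_iff)
  ultimately show ?thesis by simp
qed

lemma kron_length[simp]: "length (kron xs ys) = length xs * length ys"
  by (induct xs) (auto simp: kron_def length_concat comp_def sum_list_triv)

lemma kron_nth: "i < length xs \<Longrightarrow> j < length ys \<Longrightarrow> kron xs ys ! (i * length ys + j) = xs ! i * ys ! j"
proof (induct xs arbitrary: i)
  case Nil thus ?case by simp
next
  case (Cons x xs)
  have kc: "kron (x # xs) ys = map (\<lambda>b. x * b) ys @ kron xs ys" by (simp add: kron_def)
  show ?case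
  proof (cases i)
    case 0 thus ?thesis using Cons by (simp add: kc nth_append)
  next
    case (Suc i')
    have "Suc i' * length ys + j = length ys + (i' * length ys + j)" by simp
    thus ?thesis using Cons Suc by (simp add: kc nth_append)
  qed
qed

lemma bij_prod_idx: fixes n m :: nat shows "bij_betw (\<lambda>(i,j). i * m + j) ({..<n} \<times> {..<m}) {..<n * m}"
  unfolding bij_betw_def
proof
  show "inj_on (\<lambda>(i, j). i * m + j) ({..<n} \<times> {..<m})"
  proof (rule inj_onI, clarsimp)
    fix a b c d :: nat assume "b < m" "d < m" "a * m + b = c * m + d"
    hence "(a * m + b) div m = (c * m + d) div m" "(a * m + b) mod m = (c * m + d) mod m" by simp_all
    thus "a = c \<and> b = d" using \<open>b < m\<close> \<open>d < m\<close> by simp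
  qed
next
  show "(\<lambda>(i, j). i * m + j) ` ({..<n} \<times> {..<m}) = {..<n * m}"
  proof (intro equalityI subsetI)
    fix x assume "x \<in> (\<lambda>(i, j). i * m + j) ` ({..<n} \<times> {..<m})"
    then obtain i j where "i < n" "j < m" "x = i * m + j" by auto
    moreover have "i * m + j < n * m"
    proof -
      have "i * m + j < (i + 1) * m" using \<open>j < m\<close> by simp
      also have "\<dots> \<le> n * m" using \<open>i < n\<close> by (intro mult_right_mono) auto
      finally show ?thesis .
    qed
    ultimately show "x \<in> {..<n * m}" by simp
  next
    fix x assume x: "x \<in> {..<n * m}"
    hence m0: "m > 0" by (cases m) auto
    have "x = (x div m) * m + x mod m" by simp
    moreover have "x div m < n" using x by (simp add: div_less_iff_less_mult m0)
    moreover have "x mod m < m" using m0 by simp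
    ultimately show "x \<in> (\<lambda>(i, j). i * m + j) ` ({..<n} \<times> {..<m})" by (auto intro!: image_eqI[where x="(x div m, x mod m)"])
  qed
qed

lemma bij_plus_idx: fixes n m :: nat shows "bij_betw (case_sum (\<lambda>i. i) (\<lambda>j. n + j)) ({..<n} <+> {..<m}) {..<n + m}"
  unfolding bij_betw_def
proof
  show "inj_on (case_sum (\<lambda>i. i) ((+) n)) ({..<n} <+> {..<m})"
    by (auto simp: inj_on_def)
  show "case_sum (\<lambda>i. i) ((+) n) ` ({..<n} <+> {..<m}) = {..<n + m}"
  proof (intro equalityI subsetI)
    fix x assume "x \<in> {..<n + m}"
    thus "x \<in> case_sum (\<lambda>i. i) ((+) n) ` ({..<n} <+> {..<m})"
      by (cases "x < n") (auto intro: image_eqI[where x="Inl x"] image_eqI[where x="Inr (x - n)"])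
  qed auto
qed


lemma joint_prob_nonneg: "density_op N \<rho> \<Longrightarrow> 0 \<le> joint_prob N \<rho> X X' i \<mu>"
proof -
  assume "density_op N \<rho>"
  hence "\<forall>v. 0 \<le> Re (\<Sum>a\<in>idx2 N. \<Sum>b\<in>idx2 N. cnj (v a) * \<rho> a b * v b)"
    unfolding density_op_def by blast
  from spec[OF this, of "\<lambda>a. X i (fst a) * X' \<mu> (snd a)"] show ?thesis
    unfolding joint_prob_def by simp
qed

lemma maj_marginal_length[simp]: "length (maj_marginal N \<rho> X X') = N"
  by (simp add: maj_marginal_def)

lemma pvec_length[simp]: "length (pvec N \<rho> X X' \<mu>) = N"
  by (simp add: pvec_def)

lemma maj_marginal_nth: "k < N \<Longrightarrow> maj_marginal N \<rho> X X' ! k = (\<Sum>\<mu><N. sort_desc (pvec N \<rho> X X' \<mu>) ! k)"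
  by (simp add: maj_marginal_def)

lemma maj_marginal_nonneg:
  assumes "density_op N \<rho>" "k < N"
  shows "0 \<le> maj_marginal N \<rho> X X' ! k"
proof -
  have "0 \<le> sort_desc (pvec N \<rho> X X' \<mu>) ! k" for \<mu>
  proof -
    have "sort_desc (pvec N \<rho> X X' \<mu>) ! k \<in> set (pvec N \<rho> X X' \<mu>)"
      using nth_mem[of k "sort_desc (pvec N \<rho> X X' \<mu>)"] assms(2) by simp
    thus ?thesis using joint_prob_nonneg[OF assms(1)] by (auto simp: pvec_def)
  qed
  thus ?thesis using assms(2) by (simp add: maj_marginal_nth sum_nonneg)
qed

lemma maj_marginal_sorted: "sorted (rev (maj_marginal N \<rho> X X'))"
  unfolding sorted_rev_iff_nth_mono
proof (intro allI impI)
  fix i j assume ij: "i \<le> j" "j < length (maj_marginal N \<rho> X X')"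
  have "sort_desc (pvec N \<rho> X X' \<mu>) ! j \<le> sort_desc (pvec N \<rho> X X' \<mu>) ! i" for \<mu>
    using sorted_sort_desc[of "pvec N \<rho> X X' \<mu>"] ij unfolding sorted_rev_iff_nth_mono by simp
  thus "maj_marginal N \<rho> X X' ! j \<le> maj_marginal N \<rho> X X' ! i"
    using ij by (simp add: maj_marginal_nth sum_mono)
qed

lemma sum_list_vsum: "length xs = length ys \<Longrightarrow> sum_list (vsum xs ys) = sum_list xs + sum_list ys"
  by (induct xs ys rule: list_induct2) (auto simp: vsum_def)

lemma take_vsum: "take k (vsum xs ys) = vsum (take k xs) (take k ys)"
  by (simp add: vsum_def take_map take_zip)

lemma vsum_length[simp]: "length (vsum xs ys) = min (length xs) (length ys)"
  by (simp add: vsum_def)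

lemma vsum_sorted:
  assumes "sorted (rev xs)" "sorted (rev ys)" "length xs = length ys"
  shows "sorted (rev (vsum xs ys))"
  using assms unfolding sorted_rev_iff_nth_mono by (auto simp: vsum_def add_mono)

lemma vsum_maj:
  assumes a: "sorted (rev a)" and b: "sorted (rev b)" and la: "length a = N" and lb: "length b = N"
    and ls: "length s = N" and lt: "length t = N"
    and ma: "majorized a s" and mb: "majorized b t"
  shows "majorized (vsum a b) (vsum (sort_desc s) (sort_desc t))"
  unfolding majorized_def
proof (intro conjI allI impI)
  show "length (vsum a b) = length (vsum (sort_desc s) (sort_desc t))" using la lb ls lt by simp
next
  fix k assume k: "k \<le> length (vsum a b)"
  hence kN: "k \<le> N" using la lb by simp
  have "sum_list (take k (sort_desc (vsum a b))) = sum_list (take k (vsum a b))"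
    using sort_desc_id[OF vsum_sorted[OF a b]] la lb by simp
  also have "\<dots> = sum_list (take k a) + sum_list (take k b)"
    unfolding take_vsum by (rule sum_list_vsum) (use la lb in simp)
  also have "\<dots> = sum_list (take k (sort_desc a)) + sum_list (take k (sort_desc b))"
    using sort_desc_id[OF a] sort_desc_id[OF b] by simp
  also have "\<dots> \<le> sum_list (take k (sort_desc s)) + sum_list (take k (sort_desc t))"
    using ma mb kN la lb unfolding majorized_def by (intro add_mono) auto
  also have "\<dots> = sum_list (take k (vsum (sort_desc s) (sort_desc t)))"
    unfolding take_vsum by (rule sum_list_vsum[symmetric]) (use ls lt in simp)
  also have "\<dots> \<le> sum_list (take k (sort_desc (vsum (sort_desc s) (sort_desc t))))"
    by (rule take_sum_le) (use kN ls lt in simp)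
  finally show "sum_list (take k (sort_desc (vsum a b))) \<le> sum_list (take k (sort_desc (vsum (sort_desc s) (sort_desc t))))" .
next
  have "sum_list (vsum a b) = sum_list a + sum_list b" using la lb by (simp add: sum_list_vsum)
  also have "\<dots> = sum_list s + sum_list t" using ma mb unfolding majorized_def by simp
  also have "\<dots> = sum_list (vsum (sort_desc s) (sort_desc t))" using ls lt by (simp add: sum_list_vsum)
  finally show "sum_list (vsum a b) = sum_list (vsum (sort_desc s) (sort_desc t))" .
qed

lemma append_maj:
  assumes la: "length a = N" and lb: "length b = N" and ls: "length s = N" and lt: "length t = N"
    and ma: "majorized a s" and mb: "majorized b t"
  shows "majorized (a @ b) (s @ t)"
proof -
  let ?h = "case_sum (\<lambda>i. i) (\<lambda>j. N + j) :: nat + nat \<Rightarrow> nat"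
  have fa: "fmaj {..<N} ((!) a) ((!) s)" and fb: "fmaj {..<N} ((!) b) ((!) t)"
    using ma mb la lb unfolding majorized_iff by auto
  have "fmaj ({..<N} <+> {..<N}) (case_sum ((!) a) ((!) b)) (case_sum ((!) s) ((!) t))"
    by (rule fmaj_plus[OF _ _ fa fb]) auto
  hence "fmaj ({..<N} <+> {..<N}) ((!) (a @ b) \<circ> ?h) ((!) (s @ t) \<circ> ?h)"
    by (rule iffD1[OF fmaj_cong, rotated 2]) (auto simp: nth_append la lb ls lt)
  hence "fmaj {..<N + N} ((!) (a @ b)) ((!) (s @ t))"
    using fmaj_bij[OF bij_plus_idx[of N N]] by blast
  thus ?thesis unfolding majorized_iff using la lb ls lt by simp
qed

lemma kron_maj:
  assumes la: "length a = N" and lb: "length b = N" and ls: "length s = N" and lt: "length t = N"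
    and ma: "majorized a s" and mb: "majorized b t"
    and na: "\<And>i. i < N \<Longrightarrow> 0 \<le> a ! i" and nt: "\<And>i. i < N \<Longrightarrow> 0 \<le> t ! i"
  shows "majorized (kron a b) (kron s t)"
proof -
  let ?h = "(\<lambda>(i,j). i * N + j) :: nat \<times> nat \<Rightarrow> nat"
  have fa: "fmaj {..<N} ((!) a) ((!) s)" and fb: "fmaj {..<N} ((!) b) ((!) t)"
    using ma mb la lb unfolding majorized_iff by auto
  have f1: "fmaj ({..<N} \<times> {..<N}) (\<lambda>(i,j). a ! i * b ! j) (\<lambda>(i,j). a ! i * t ! j)"
    by (rule fmaj_prod_left[OF _ _ _ fb]) (auto intro: na)
  have f2: "fmaj ({..<N} \<times> {..<N}) (\<lambda>(i,j). a ! i * t ! j) (\<lambda>(i,j). s ! i * t ! j)"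
    by (rule fmaj_prod_right[OF _ _ _ fa]) (auto intro: nt)
  have "fmaj ({..<N} \<times> {..<N}) (\<lambda>(i,j). a ! i * b ! j) (\<lambda>(i,j). s ! i * t ! j)"
    by (rule fmaj_trans[OF f1 f2])
  hence "fmaj ({..<N} \<times> {..<N}) ((!) (kron a b) \<circ> ?h) ((!) (kron s t) \<circ> ?h)"
  proof (rule iffD1[OF fmaj_cong, rotated 2])
    fix x assume "x \<in> {..<N} \<times> {..<N}"
    then obtain i j where x: "x = (i,j)" "i < N" "j < N" by auto
    show "(case x of (i, j) \<Rightarrow> a ! i * b ! j) = ((!) (kron a b) \<circ> ?h) x"
      using kron_nth[of i a j b] x la lb by simp
    show "(case x of (i, j) \<Rightarrow> s ! i * t ! j) = ((!) (kron s t) \<circ> ?h) x"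
      using kron_nth[of i s j t] x ls lt by simp
  qed
  hence "fmaj {..<N * N} ((!) (kron a b)) ((!) (kron s t))"
    using fmaj_bij[OF bij_prod_idx[of N N]] by blast
  thus ?thesis unfolding majorized_iff using la lb ls lt by simp
qed

theorem corollary1:
  fixes N :: nat
    and \<rho> :: "nat \<times> nat \<Rightarrow> nat \<times> nat \<Rightarrow> complex"
    and X Y X' Y' :: "nat \<Rightarrow> nat \<Rightarrow> complex"
    and sx sy :: "real list"
  assumes "density_op N \<rho>"
    and "onb N X" and "onb N Y"
    and "is_maj_lub N (marginal_set N \<rho> X) sx"
    and "is_maj_lub N (marginal_set N \<rho> Y) sy"
    and "onb N X'" and "onb N Y'"
  shows "majorized (maj_marginal N \<rho> X X' @ maj_marginal N \<rho> Y Y') (sx @ sy)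
       \<and> majorized (kron (maj_marginal N \<rho> X X') (maj_marginal N \<rho> Y Y')) (kron sx sy)
       \<and> majorized (vsum (maj_marginal N \<rho> X X') (maj_marginal N \<rho> Y Y'))
                   (vsum (sort_desc sx) (sort_desc sy))"
proof -
  let ?a = "maj_marginal N \<rho> X X'" and ?b = "maj_marginal N \<rho> Y Y'"
  have ma: "majorized ?a sx" using assms(4,6) unfolding is_maj_lub_def marginal_set_def by blast
  have mb: "majorized ?b sy" using assms(5,7) unfolding is_maj_lub_def marginal_set_def by blast
  have ls: "length sx = N" and lt: "length sy = N"
    using assms(4,5) unfolding is_maj_lub_def desc_prob_vec_def by auto
  have nt: "0 \<le> sy ! i" if "i < N" for i
    using assms(5) that lt unfolding is_maj_lub_def desc_prob_vec_def by (auto simp: nth_mem)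
  have na: "0 \<le> ?a ! i" if "i < N" for i by (rule maj_marginal_nonneg[OF assms(1) that])
  show ?thesis
    using append_maj[OF _ _ ls lt ma mb] kron_maj[OF _ _ ls lt ma mb na nt]
      vsum_maj[OF maj_marginal_sorted maj_marginal_sorted _ _ ls lt ma mb] by simp
qed

end
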